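(* Let $K$ be a skew field that is finite-dimensional over its center, and take $\sigma=\mathrm{id}$, $\delta=0$, so $K[T;\sigma,\delta]=K[T]$ with $T$ central. Then a skew rational function in $K(T)$ is defined at $a\in K$ if and only if the denominator $P(T)$ of its minimal representation satisfies $P(c)\neq0$ for every $c\in\{bab^{-1}:b\in K^*\}$.
   Context: Here $K^*=K\setminus\{0\}$ acts on $K$ by conjugation ${}^{b}a=bab^{-1}$, and $\Delta(a)=\{bab^{-1}:b\in K^*\}$. For $P\in K[T]$ and $a\in K$, $P(a)$ is the unique element of $K$ with $P(T)-P(a)\in K[T](T-a)$ (i.e. $P(a)=\sum p_ia^i$ for $P=\sum p_iT^i$). For a set $Z$ with a $K^*$-action, the skew product of functions $Z\to K$ is $(f\diamond g)(z)=f({}^{g(z)}z)g(z)$ if $g(z)\neq0$, $0$ otherwise; $f$ is skew invertible if some $g$ satisfies $f\diamond g=g\diamond f=1$. $K(T)$ is the division ring of left fractions of $K[T]$; each $f$ has a unique minimal representation $P(T)^{-1}Q(T)$ with $P$ monic of least degree; $f$ is defined at $a$ if the function $\Delta(a)\to K$, $c\mapsto P(c)$, is skew invertible. *)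

theory Defs
  imports Main
begin

text \<open>Skew field K = type 'a of class division_ring. Polynomials in K[T] (T central)
are coefficient functions nat => 'a with finite support.\<close>

definition center :: "'a::division_ring set" where
  "center = {z. \<forall>x. z * x = x * z}"

definition fin_dim_over_center :: "'a::division_ring itself \<Rightarrow> bool" where
  "fin_dim_over_center _ \<longleftrightarrow>
     (\<exists>B::'a set. finite B \<and>
        (\<forall>x::'a. \<exists>c. (\<forall>b\<in>B. c b \<in> center) \<and> x = (\<Sum>b\<in>B. c b * b)))"

definition spoly :: "(nat \<Rightarrow> 'a::zero) \<Rightarrow> bool" where
  "spoly p \<longleftrightarrow> (\<exists>n. \<forall>i\<ge>n. p i = 0)"

definition pzero :: "nat \<Rightarrow> 'a::zero" where
  "pzero = (\<lambda>_. 0)"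

text \<open>Product in K[T] with T central: coefficients convolve.\<close>
definition pmul :: "(nat \<Rightarrow> 'a::ring) \<Rightarrow> (nat \<Rightarrow> 'a) \<Rightarrow> nat \<Rightarrow> 'a" where
  "pmul p q = (\<lambda>n. \<Sum>i\<le>n. p i * q (n - i))"

definition pdeg :: "(nat \<Rightarrow> 'a::zero) \<Rightarrow> nat" where
  "pdeg p = (if p = pzero then 0 else (GREATEST i. p i \<noteq> 0))"

definition monic :: "(nat \<Rightarrow> 'a::{zero,one}) \<Rightarrow> bool" where
  "monic p \<longleftrightarrow> p \<noteq> pzero \<and> p (pdeg p) = 1"

definition peval :: "(nat \<Rightarrow> 'a::ring_1) \<Rightarrow> 'a \<Rightarrow> 'a" where
  "peval p a = (\<Sum>i\<le>pdeg p. p i * a ^ i)"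

text \<open>(P,Q) with P nonzero represents the left fraction P^{-1}Q in K(T).
Two left fractions are equal iff they have a common left expansion (Ore).\<close>
definition same_frac ::
  "(nat \<Rightarrow> 'a::division_ring) \<Rightarrow> (nat \<Rightarrow> 'a) \<Rightarrow> (nat \<Rightarrow> 'a) \<Rightarrow> (nat \<Rightarrow> 'a) \<Rightarrow> bool" where
  "same_frac P Q P' Q' \<longleftrightarrow>
     (\<exists>u u'. spoly u \<and> spoly u' \<and> u \<noteq> pzero \<and> u' \<noteq> pzero \<and>
        pmul u P = pmul u' P' \<and> pmul u Q = pmul u' Q')"

definition is_rep :: "(nat \<Rightarrow> 'a::division_ring) \<Rightarrow> (nat \<Rightarrow> 'a) \<Rightarrow> bool" where
  "is_rep P Q \<longleftrightarrow> spoly P \<and> spoly Q \<and> P \<noteq> pzero"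

definition minimal_rep :: "(nat \<Rightarrow> 'a::division_ring) \<Rightarrow> (nat \<Rightarrow> 'a) \<Rightarrow> bool" where
  "minimal_rep P Q \<longleftrightarrow> is_rep P Q \<and> monic P \<and>
     (\<forall>P' Q'. is_rep P' Q' \<and> monic P' \<and> same_frac P Q P' Q' \<longrightarrow> pdeg P \<le> pdeg P')"

definition conj_class :: "'a::division_ring \<Rightarrow> 'a set" ("\<Delta>") where
  "\<Delta> a = {b * a * inverse b | b. b \<noteq> 0}"

text \<open>Skew product of functions Z -> K, with K^* acting on Z by conjugation.\<close>
definition skew_prod :: "('a::division_ring \<Rightarrow> 'a) \<Rightarrow> ('a \<Rightarrow> 'a) \<Rightarrow> 'a \<Rightarrow> 'a" where
  "skew_prod f g z = (if g z \<noteq> 0 then f (g z * z * inverse (g z)) * g z else 0)"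

definition skew_invertible :: "'a::division_ring set \<Rightarrow> ('a \<Rightarrow> 'a) \<Rightarrow> bool" where
  "skew_invertible Z f \<longleftrightarrow>
     (\<exists>g. \<forall>z\<in>Z. skew_prod f g z = 1 \<and> skew_prod g f z = 1)"

text \<open>f = P^{-1}Q (given by its minimal representation) is defined at a.\<close>
definition defined_at :: "(nat \<Rightarrow> 'a::division_ring) \<Rightarrow> 'a \<Rightarrow> bool" where
  "defined_at P a \<longleftrightarrow> skew_invertible (\<Delta> a) (\<lambda>c. peval P c)"

end

theory Submission imports Defs "HOL.Vector_Spaces" begin
lemma center_0: "0 \<in> center" and center_1: "1 \<in> center"
  by (auto simp: center_def)
lemma center_add: "x \<in> center \<Longrightarrow> y \<in> center \<Longrightarrow> x + y \<in> center"
  unfolding center_def mem_Collect_eq by (metis distrib_left distrib_right)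
lemma center_minus: "x \<in> center \<Longrightarrow> - x \<in> center"
  unfolding center_def mem_Collect_eq by (metis minus_mult_left minus_mult_right)
lemma center_diff: "x \<in> center \<Longrightarrow> y \<in> center \<Longrightarrow> x - y \<in> center"
  by (metis center_add center_minus diff_conv_add_uminus)
lemma center_mult: "x \<in> center \<Longrightarrow> y \<in> center \<Longrightarrow> x * y \<in> center"
  unfolding center_def mem_Collect_eq by (metis mult.assoc)
lemma center_inverse:
  fixes z :: "'a::division_ring"
  assumes "z \<in> center" shows "inverse z \<in> center"
proof (cases "z = 0")
  case True then show ?thesis by (simp add: center_def)
next
  case False
  have "inverse z * x = x * inverse z" for x
  proof -
    have "inverse z * x = inverse z * (x * z) * inverse z" using False by (simp add: mult.assoc)
    also have "\<dots> = inverse z * (z * x) * inverse z" using assms by (simp add: center_def)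
    also have "\<dots> = x * inverse z" using False by (simp add: mult.assoc[symmetric])
    finally show ?thesis .
  qed
  then show ?thesis by (simp add: center_def)
qed

typedef (overloaded) ('a::division_ring) cen = "center :: 'a set" morphisms rep_cen Abs_cen
  using center_0 by blast

setup_lifting type_definition_cen

instantiation cen :: (division_ring) field
begin
lift_definition zero_cen :: "'a cen" is 0 by (rule center_0)
lift_definition one_cen :: "'a cen" is 1 by (rule center_1)
lift_definition plus_cen :: "'a cen \<Rightarrow> 'a cen \<Rightarrow> 'a cen" is "(+)" by (rule center_add)
lift_definition minus_cen :: "'a cen \<Rightarrow> 'a cen \<Rightarrow> 'a cen" is "(-)" by (rule center_diff)
lift_definition uminus_cen :: "'a cen \<Rightarrow> 'a cen" is uminus by (rule center_minus)
lift_definition times_cen :: "'a cen \<Rightarrow> 'a cen \<Rightarrow> 'a cen" is "(*)" by (rule center_mult)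
lift_definition inverse_cen :: "'a cen \<Rightarrow> 'a cen" is inverse by (rule center_inverse)
lift_definition divide_cen :: "'a cen \<Rightarrow> 'a cen \<Rightarrow> 'a cen" is "\<lambda>x y. x * inverse y"
  by (rule center_mult, assumption, rule center_inverse)
instance
proof
  fix a b c :: "'a cen"
  show "a * b * c = a * (b * c)" by transfer (simp add: mult.assoc)
  show "a * b = b * a" by transfer (unfold center_def, blast)
  show "1 * a = a" by transfer simp
  show "a + b + c = a + (b + c)" by transfer (simp add: add.assoc)
  show "a + b = b + a" by transfer (simp add: add.commute)
  show "0 + a = a" by transfer simp
  show "- a + a = 0" by transfer simp
  show "a - b = a + - b" by transfer simp
  show "(a + b) * c = a * c + b * c" by transfer (simp add: distrib_right)
  show "(0::'a cen) \<noteq> 1" by transfer simp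
qed (transfer, simp)+
end

lemma rep_cen_center: "rep_cen c \<in> center" using rep_cen by blast
lemma conj_pow:
  fixes a b :: "'a::division_ring"
  assumes "b \<noteq> 0" shows "(b * a * inverse b) ^ i = b * a ^ i * inverse b"
proof (induction i)
  case 0 then show ?case using assms by simp
next
  case (Suc i)
  have "(b * a * inverse b) ^ Suc i = (b * a * inverse b) * (b * a ^ i * inverse b)"
    using Suc by simp
  also have "\<dots> = b * a * (inverse b * b) * a ^ i * inverse b" by (simp add: mult.assoc)
  also have "\<dots> = b * a ^ Suc i * inverse b" using assms by (simp add: mult.assoc)
  finally show ?case .
qed

lemma vs_cen: "vector_space (\<lambda>(c::'a::division_ring cen) x. rep_cen c * x)"
  by unfold_locales (auto simp: plus_cen.rep_eq times_cen.rep_eq one_cen.rep_eq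
      distrib_left distrib_right mult.assoc)

lemma surj_lin:
  fixes L :: "'a::division_ring \<Rightarrow> 'a"
  assumes fd: "fin_dim_over_center TYPE('a)"
    and add: "\<And>x y. L (x + y) = L x + L y"
    and sc: "\<And>c x. c \<in> center \<Longrightarrow> L (c * x) = c * L x"
    and inj: "inj L"
  shows "surj L"
proof -
  define s where "s = (\<lambda>(c::'a cen) x. rep_cen c * x)"
  interpret vs: vector_space s unfolding s_def by (rule vs_cen)
  obtain B :: "'a set" where fB: "finite B"
    and sp: "\<And>x. \<exists>c. (\<forall>b\<in>B. c b \<in> center) \<and> x = (\<Sum>b\<in>B. c b * b)"
    using fd unfolding fin_dim_over_center_def by blast
  have spB: "UNIV \<subseteq> vs.span B"
  proof
    fix x :: 'a
    obtain c where c: "\<forall>b\<in>B. c b \<in> center" "x = (\<Sum>b\<in>B. c b * b)" using sp by blast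
    have "(\<Sum>b\<in>B. c b * b) = (\<Sum>b\<in>B. s (Abs_cen (c b)) b)"
      using c(1) by (intro sum.cong) (auto simp: s_def Abs_cen_inverse)
    also have "\<dots> \<in> vs.span B"
      by (intro vs.span_sum vs.span_scale vs.span_base)
    finally show "x \<in> vs.span B" using c(2) by simp
  qed
  obtain B' where B': "B' \<subseteq> UNIV" "vs.independent B'" "UNIV \<subseteq> vs.span B'"
    by (meson vs.basis_exists)
  have fB': "finite B'" using vs.independent_span_bound[OF fB B'(2)] spB by auto
  interpret fd: finite_dimensional_vector_space s B'
    by unfold_locales (use fB' B' in auto)
  have lin: "Vector_Spaces.linear s s L"
    unfolding module_hom_iff_linear[symmetric] module_hom_def module_hom_axioms_def
  proof (intro conjI allI)
    show "module s" using vs.vector_space_axioms by (simp add: module_iff_vector_space)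
    show "L (s r b) = s r (L b)" for r b
      by (simp add: s_def sc rep_cen_center)
  qed (use vs.vector_space_axioms in \<open>simp_all add: add module_iff_vector_space\<close>)
  show ?thesis by (rule fd.linear_inj_imp_surj[OF lin inj])
qed

theorem corollary3p6:
  fixes P Q :: "nat \<Rightarrow> 'a::division_ring" and a :: 'a
  assumes "fin_dim_over_center TYPE('a)"
    and "minimal_rep P Q"
  shows "defined_at P a \<longleftrightarrow> (\<forall>c\<in>\<Delta> a. peval P c \<noteq> 0)"
proof
  assume "defined_at P a"
  then obtain g where g: "\<forall>z\<in>\<Delta> a. skew_prod (peval P) g z = 1 \<and> skew_prod g (peval P) z = 1"
    unfolding defined_at_def skew_invertible_def by blast
  show "\<forall>c\<in>\<Delta> a. peval P c \<noteq> 0"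
  proof (intro ballI notI)
    fix c assume "c \<in> \<Delta> a" "peval P c = 0"
    then show False using g by (auto simp: skew_prod_def)
  qed
next
  assume nz: "\<forall>c\<in>\<Delta> a. peval P c \<noteq> 0"
  define f where "f = peval P"
  define L where "L = (\<lambda>b. \<Sum>i\<le>pdeg P. P i * b * a ^ i)"
  have key: "f (b * a * inverse b) = L b * inverse b" if "b \<noteq> 0" for b
  proof -
    have "P i * (b * a * inverse b) ^ i = P i * b * a ^ i * inverse b" for i
      using conj_pow[OF that, of a i] by (metis mult.assoc)
    then show ?thesis unfolding f_def L_def peval_def by (simp add: sum_distrib_right)
  qed
  have Ladd: "L (x + y) = L x + L y" for x y
  proof -
    have "P i * (x + y) * a ^ i = P i * x * a ^ i + P i * y * a ^ i" for i
      by (metis distrib_left distrib_right)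
    then show ?thesis unfolding L_def by (simp only: sum.distrib)
  qed
  have Lsc: "L (c * x) = c * L x" if "c \<in> center" for c x
  proof -
    have "P i * (c * x) * a ^ i = c * (P i * x * a ^ i)" for i
    proof -
      have "\<forall>x. c * x = x * c" using that by (simp add: center_def)
      then have "P i * c = c * P i" by (metis)
      then show ?thesis by (metis mult.assoc)
    qed
    then show ?thesis unfolding L_def by (simp add: sum_distrib_left)
  qed
  have L0: "L b = 0 \<Longrightarrow> b = 0" for b
  proof (rule ccontr)
    assume "L b = 0" "b \<noteq> 0"
    then have "f (b * a * inverse b) = 0" using key by simp
    moreover have "b * a * inverse b \<in> \<Delta> a" using \<open>b \<noteq> 0\<close> by (auto simp: conj_class_def)
    ultimately show False using nz f_def by auto
  qed
  have Lminus: "L (x - y) = L x - L y" for x y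
    using Ladd[of "x - y" y] by (simp add: algebra_simps)
  have inj: "inj L"
  proof (rule injI)
    fix x y assume "L x = L y"
    then have "L (x - y) = 0" using Lminus by simp
    then show "x = y" using L0[of "x - y"] by simp
  qed
  have surj: "surj L"
    by (rule surj_lin[OF assms(1) Ladd Lsc inj])
  define \<Phi> where "\<Phi> = (\<lambda>z. f z * z * inverse (f z))"
  have Phi: "\<Phi> (b * a * inverse b) = L b * a * inverse (L b)" if "b \<noteq> 0" for b
  proof -
    have Lb: "L b \<noteq> 0" using L0 that by blast
    have "\<Phi> (b * a * inverse b) = L b * inverse b * (b * a * inverse b) * (b * inverse (L b))"
      unfolding \<Phi>_def key[OF that] using that Lb by (simp add: nonzero_inverse_mult_distrib)
    also have "\<dots> = L b * (inverse b * b) * a * (inverse b * b) * inverse (L b)"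
      by (simp add: mult.assoc)
    finally show ?thesis using that by simp
  qed
  have bij: "bij_betw \<Phi> (\<Delta> a) (\<Delta> a)"
  proof (rule bij_betw_imageI)
    show "inj_on \<Phi> (\<Delta> a)"
    proof (rule inj_onI)
      fix z1 z2 assume "z1 \<in> \<Delta> a" "z2 \<in> \<Delta> a" and eq: "\<Phi> z1 = \<Phi> z2"
      then obtain b1 b2 where b: "b1 \<noteq> 0" "b2 \<noteq> 0" "z1 = b1 * a * inverse b1" "z2 = b2 * a * inverse b2"
        by (auto simp: conj_class_def)
      have n1: "L b1 \<noteq> 0" and n2: "L b2 \<noteq> 0" using L0 b by blast+
      have e: "L b1 * a * inverse (L b1) = L b2 * a * inverse (L b2)" using eq b Phi by simp
      define d where "d = inverse (L b2) * L b1"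
      have dnz: "d \<noteq> 0" using n1 n2 d_def by simp
      have "L b1 * a = L b2 * a * inverse (L b2) * L b1"
        using arg_cong[OF e, of "\<lambda>t. t * L b1"] n1 by (simp add: mult.assoc)
      then have "inverse (L b2) * (L b1 * a) = inverse (L b2) * (L b2 * a * inverse (L b2) * L b1)"
        by simp
      then have da: "d * a = a * d" unfolding d_def using n2 by (simp add: mult.assoc[symmetric])
      have dpow: "d * a ^ i = a ^ i * d" for i
        using power_commuting_commutes[of a d i] da by simp
      have "L (b2 * d) = L b2 * d"
      proof -
        have "P i * (b2 * d) * a ^ i = P i * b2 * a ^ i * d" for i
          by (metis dpow mult.assoc)
        then show ?thesis unfolding L_def by (simp add: sum_distrib_right)
      qed
      also have "\<dots> = L b1" unfolding d_def using n2 by (simp add: mult.assoc[symmetric])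
      finally have "b1 = b2 * d" using inj by (auto dest: injD)
      then have "z1 = b2 * (d * a * inverse d) * inverse b2"
        using b dnz by (simp add: nonzero_inverse_mult_distrib mult.assoc)
      also have "d * a * inverse d = a" using da dnz by (simp add: mult.assoc)
      finally show "z1 = z2" using b by simp
    qed
    show "\<Phi> ` \<Delta> a = \<Delta> a"
    proof
      show "\<Phi> ` \<Delta> a \<subseteq> \<Delta> a"
      proof
        fix y assume "y \<in> \<Phi> ` \<Delta> a"
        then obtain b where "b \<noteq> 0" "y = \<Phi> (b * a * inverse b)" by (auto simp: conj_class_def)
        then show "y \<in> \<Delta> a" using Phi L0 by (auto simp: conj_class_def)
      qed
      show "\<Delta> a \<subseteq> \<Phi> ` \<Delta> a"
      proof
        fix z assume "z \<in> \<Delta> a"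
        then obtain c where c: "c \<noteq> 0" "z = c * a * inverse c" by (auto simp: conj_class_def)
        obtain b where b: "L b = c" using surj by (metis surjD)
        have "b \<noteq> 0" using b c Lminus[of 0 0] by auto
        then have "b * a * inverse b \<in> \<Delta> a" "\<Phi> (b * a * inverse b) = z"
          using Phi b c by (auto simp: conj_class_def)
        then show "z \<in> \<Phi> ` \<Delta> a" by (metis image_eqI)
      qed
    qed
  qed
  define g where "g = (\<lambda>z. inverse (f (inv_into (\<Delta> a) \<Phi> z)))"
  have "\<forall>z\<in>\<Delta> a. skew_prod f g z = 1 \<and> skew_prod g f z = 1"
  proof
    fix z assume z: "z \<in> \<Delta> a"
    define w where "w = inv_into (\<Delta> a) \<Phi> z"
    have zim: "z \<in> \<Phi> ` \<Delta> a" using bij z by (simp add: bij_betw_def)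
    have w: "w \<in> \<Delta> a" "\<Phi> w = z" unfolding w_def
      using inv_into_into[OF zim] f_inv_into_f[OF zim] by auto
    have fw: "f w \<noteq> 0" using nz w f_def by auto
    have fz: "f z \<noteq> 0" using nz z f_def by auto
    have gz: "g z = inverse (f w)" unfolding g_def w_def ..
    have "g z * z * inverse (g z) = w"
      using fw gz w(2)[symmetric] unfolding \<Phi>_def by (simp add: mult.assoc flip: mult.assoc[of "inverse (f w)" "f w"])
    then have 1: "skew_prod f g z = 1" using gz fw by (simp add: skew_prod_def)
    have "inv_into (\<Delta> a) \<Phi> (\<Phi> z) = z" using bij z by (rule bij_betw_inv_into_left)
    then have "g (f z * z * inverse (f z)) = inverse (f z)" unfolding g_def \<Phi>_def by simp
    then have 2: "skew_prod g f z = 1" using fz by (simp add: skew_prod_def)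
    show "skew_prod f g z = 1 \<and> skew_prod g f z = 1" using 1 2 by simp
  qed
  then show "defined_at P a" unfolding defined_at_def skew_invertible_def f_def by blast
qed

end
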